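(* Let $t$ be a positive integer and $G$ a complete multipartite graph. Consider the following greedy procedure: while uncolored vertices remain, let $H$ be the subgraph induced by the uncolored vertices (itself a complete multipartite graph); if the largest part of $H$ has at least $2t$ vertices, let $W$ be that entire part, otherwise let $W$ be a maximum $t$-sparse set of $H$; assign a new color to all vertices of $W$. Then the resulting coloring is a $t$-relaxed coloring of $G$ using at most $2\chi_t(G)$ colors.
   Context: A set $S\subseteq V(G)$ is $t$-sparse if the induced subgraph $G[S]$ has maximum degree at most $t$. A map $f$ from $V(G)$ to a finite set of colors is a $t$-relaxed coloring if every vertex $u$ has at most $t$ neighbors $v$ with $f(v)=f(u)$; $\chi_t(G)$ is the minimum number of colors in a $t$-relaxed coloring of $G$. *)

theory Defs
  imports Main "HOL-Library.Disjoint_Sets"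
begin

text \<open>Graphs: a finite vertex set V with adjacency relation E (only pairs in V matter).\<close>

definition complete_multipartite :: "'a set \<Rightarrow> ('a \<Rightarrow> 'a \<Rightarrow> bool) \<Rightarrow> bool" where
  "complete_multipartite V E \<longleftrightarrow> finite V \<and>
     (\<exists>P. partition_on V P \<and>
        (\<forall>u\<in>V. \<forall>v\<in>V. E u v \<longleftrightarrow> \<not> (\<exists>p\<in>P. u \<in> p \<and> v \<in> p)))"

definition t_sparse :: "nat \<Rightarrow> ('a \<Rightarrow> 'a \<Rightarrow> bool) \<Rightarrow> 'a set \<Rightarrow> bool" where
  "t_sparse t E S \<longleftrightarrow> (\<forall>u\<in>S. card {v\<in>S. E u v} \<le> t)"

definition relaxed_coloring :: "nat \<Rightarrow> 'a set \<Rightarrow> ('a \<Rightarrow> 'a \<Rightarrow> bool) \<Rightarrow> ('a \<Rightarrow> 'c) \<Rightarrow> bool" where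
  "relaxed_coloring t V E f \<longleftrightarrow> (\<forall>u\<in>V. card {v\<in>V. E u v \<and> f v = f u} \<le> t)"

definition chi_t :: "nat \<Rightarrow> 'a set \<Rightarrow> ('a \<Rightarrow> 'a \<Rightarrow> bool) \<Rightarrow> nat" where
  "chi_t t V E = (LEAST k. \<exists>f :: 'a \<Rightarrow> nat. f ` V \<subseteq> {..<k} \<and> relaxed_coloring t V E f)"

definition part_of :: "'a set \<Rightarrow> ('a \<Rightarrow> 'a \<Rightarrow> bool) \<Rightarrow> 'a set \<Rightarrow> bool" where
  "part_of U E W \<longleftrightarrow> (\<exists>u\<in>U. W = {v\<in>U. v = u \<or> \<not> E u v})"

definition greedy_step :: "nat \<Rightarrow> ('a \<Rightarrow> 'a \<Rightarrow> bool) \<Rightarrow> 'a set \<Rightarrow> 'a set \<Rightarrow> bool" where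
  "greedy_step t E U W \<longleftrightarrow>
     (if (\<exists>Q. part_of U E Q \<and> card Q \<ge> 2 * t)
      then part_of U E W \<and> (\<forall>Q. part_of U E Q \<longrightarrow> card Q \<le> card W)
      else W \<subseteq> U \<and> t_sparse t E W \<and>
           (\<forall>S. S \<subseteq> U \<and> t_sparse t E S \<longrightarrow> card S \<le> card W))"

definition greedy_run :: "nat \<Rightarrow> 'a set \<Rightarrow> ('a \<Rightarrow> 'a \<Rightarrow> bool) \<Rightarrow> 'a set list \<Rightarrow> bool" where
  "greedy_run t V E Ws \<longleftrightarrow>
     (\<forall>i < length Ws. V - \<Union>(set (take i Ws)) \<noteq> {} \<and>
                       greedy_step t E (V - \<Union>(set (take i Ws))) (Ws ! i)) \<and>
     \<Union>(set Ws) = V"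

definition run_coloring :: "'a set list \<Rightarrow> 'a \<Rightarrow> nat" where
  "run_coloring Ws v = (LEAST i. i < length Ws \<and> v \<in> Ws ! i)"

end

theory Submission
  imports Defs Complex_Main
begin

locale grun =
  fixes t :: nat and V :: "'a set" and E :: "'a \<Rightarrow> 'a \<Rightarrow> bool" and Ws :: "'a set list"
  assumes t1: "t \<ge> 1" and cm: "complete_multipartite V E" and gr: "greedy_run t V E Ws"
begin

lemma finV: "finite V"
  using cm unfolding complete_multipartite_def by blast

lemma graph_props:
  shows "\<And>u. u \<in> V \<Longrightarrow> \<not> E u u"
    and "\<And>u v. u \<in> V \<Longrightarrow> v \<in> V \<Longrightarrow> E u v = E v u"
    and "\<And>u v x. u \<in> V \<Longrightarrow> v \<in> V \<Longrightarrow> x \<in> V \<Longrightarrow> \<not> E u v \<Longrightarrow> \<not> E v x \<Longrightarrow> \<not> E u x"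
proof -
  from cm obtain P where part: "partition_on V P"
    and eq: "\<forall>u\<in>V. \<forall>v\<in>V. E u v \<longleftrightarrow> \<not> (\<exists>p\<in>P. u \<in> p \<and> v \<in> p)"
    unfolding complete_multipartite_def by blast
  from part have U: "\<Union>P = V" and D: "disjoint P" unfolding partition_on_def by auto
  show "\<And>u. u \<in> V \<Longrightarrow> \<not> E u u"
  proof -
    fix u assume u: "u \<in> V"
    then obtain p where "p \<in> P" "u \<in> p" using U by auto
    then show "\<not> E u u" using eq u by auto
  qed
  show "\<And>u v. u \<in> V \<Longrightarrow> v \<in> V \<Longrightarrow> E u v = E v u"
  proof -
    fix u v assume uv: "u \<in> V" "v \<in> V"
    have "E u v \<longleftrightarrow> \<not> (\<exists>p\<in>P. u \<in> p \<and> v \<in> p)" using eq uv by simp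
    moreover have "E v u \<longleftrightarrow> \<not> (\<exists>p\<in>P. v \<in> p \<and> u \<in> p)" using eq uv by simp
    ultimately show "E u v = E v u" by auto
  qed
  show "\<And>u v x. u \<in> V \<Longrightarrow> v \<in> V \<Longrightarrow> x \<in> V \<Longrightarrow> \<not> E u v \<Longrightarrow> \<not> E v x \<Longrightarrow> \<not> E u x"
  proof -
    fix u v x assume "u \<in> V" "v \<in> V" "x \<in> V" "\<not> E u v" "\<not> E v x"
    have e1: "\<exists>p\<in>P. u \<in> p \<and> v \<in> p" using eq \<open>u \<in> V\<close> \<open>v \<in> V\<close> \<open>\<not> E u v\<close> by simp
    have e2: "\<exists>p\<in>P. v \<in> p \<and> x \<in> p" using eq \<open>x \<in> V\<close> \<open>v \<in> V\<close> \<open>\<not> E v x\<close> by simp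
    obtain p where p: "p \<in> P" "u \<in> p" "v \<in> p" using e1 by blast
    obtain q where q: "q \<in> P" "v \<in> q" "x \<in> q" using e2 by blast
    have "p = q" using disjointD[OF D p(1) q(1)] p q by blast
    then have "\<exists>p\<in>P. u \<in> p \<and> x \<in> p" using p q by blast
    then show "\<not> E u x" using eq \<open>u \<in> V\<close> \<open>x \<in> V\<close> by simp
  qed
qed

lemmas irr = graph_props(1) and symE = graph_props(2) and transE = graph_props(3)

definition cl :: "'a set \<Rightarrow> 'a \<Rightarrow> 'a set" where
  "cl U u = {x\<in>U. x = u \<or> \<not> E u x}"

lemma cl_V: "u \<in> V \<Longrightarrow> cl V u = {x\<in>V. \<not> E u x}"
  unfolding cl_def using irr by auto

lemma cl_self: "u \<in> V \<Longrightarrow> u \<in> cl V u"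
  unfolding cl_def by auto

lemma cl_same: "u \<in> V \<Longrightarrow> v \<in> cl V u \<Longrightarrow> cl V v = cl V u"
proof -
  assume u: "u \<in> V" and v: "v \<in> cl V u"
  then have vV: "v \<in> V" and nuv: "\<not> E u v" using cl_V by auto
  show ?thesis
  proof (intro set_eqI iffI)
    fix x assume "x \<in> cl V v"
    then have "x \<in> V" "\<not> E v x" using cl_V vV by auto
    then show "x \<in> cl V u" using transE[OF u vV _ nuv] cl_V u by auto
  next
    fix x assume "x \<in> cl V u"
    then have x: "x \<in> V" "\<not> E u x" using cl_V u by auto
    have "\<not> E v u" using symE[OF u vV] nuv by simp
    then show "x \<in> cl V v" using transE[OF vV u x(1)] x cl_V vV by auto
  qed
qed

lemma cl_disj: "u \<in> V \<Longrightarrow> v \<in> V \<Longrightarrow> cl V u \<noteq> cl V v \<Longrightarrow> cl V u \<inter> cl V v = {}"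
proof (rule ccontr)
  assume a: "u \<in> V" "v \<in> V" "cl V u \<noteq> cl V v" "cl V u \<inter> cl V v \<noteq> {}"
  then obtain x where "x \<in> cl V u" "x \<in> cl V v" by blast
  then show False using cl_same a by (metis cl_def mem_Collect_eq)
qed

lemma cl_sub: "U \<subseteq> V \<Longrightarrow> cl U u = cl V u \<inter> U"
  unfolding cl_def by auto

lemma part_of_iff: "part_of U E W \<longleftrightarrow> (\<exists>u\<in>U. W = cl U u)"
  unfolding part_of_def cl_def by auto


lemma fin_cl: "finite (cl V u)"
  using finV unfolding cl_def by auto

definition U :: "nat \<Rightarrow> 'a set" where
  "U i = V - \<Union>(set (take i Ws))"

abbreviation "n \<equiv> length Ws"

lemma U_sub: "U i \<subseteq> V" unfolding U_def by auto

lemma U_0: "U 0 = V" unfolding U_def by simp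

lemma U_step: "i < n \<Longrightarrow> U (Suc i) = U i - Ws!i"
  unfolding U_def by (auto simp: take_Suc_conv_app_nth)

lemma U_mono: "i \<le> j \<Longrightarrow> U j \<subseteq> U i"
  unfolding U_def using set_take_subset_set_take[of i j Ws] by auto

lemma gs: "i < n \<Longrightarrow> U i \<noteq> {} \<and> greedy_step t E (U i) (Ws!i)"
  using gr unfolding greedy_run_def U_def by blast

lemma unionV: "\<Union>(set Ws) = V"
  using gr unfolding greedy_run_def by blast

lemma W_sub: "i < n \<Longrightarrow> Ws!i \<subseteq> U i"
  using gs[of i] unfolding greedy_step_def part_of_iff cl_def by (auto split: if_splits)

lemma W_disj: "i < j \<Longrightarrow> j < n \<Longrightarrow> Ws!i \<inter> Ws!j = {}"
proof -
  assume a: "i < j" "j < n"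
  have "Ws!j \<subseteq> U j" using W_sub a by auto
  also have "\<dots> \<subseteq> U (Suc i)" using U_mono a by auto
  also have "\<dots> = U i - Ws!i" using U_step a by auto
  finally show ?thesis by auto
qed

lemma W_disj': "i < n \<Longrightarrow> j < n \<Longrightarrow> i \<noteq> j \<Longrightarrow> Ws!i \<inter> Ws!j = {}"
  using W_disj by (metis Int_commute nat_neq_iff)

lemma V_UN: "V = (\<Union>i\<in>{..<n}. Ws!i)"
  using unionV by (auto simp: set_conv_nth)

lemma fin_W: "i < n \<Longrightarrow> finite (Ws!i)"
  using W_sub U_sub finV by (meson finite_subset)

lemma W_sparse: "i < n \<Longrightarrow> t_sparse t E (Ws!i)"
proof -
  assume i: "i < n"
  show ?thesis
  proof (cases "\<exists>Q. part_of (U i) E Q \<and> card Q \<ge> 2 * t")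
    case True
    then have "part_of (U i) E (Ws!i)" using gs[OF i] unfolding greedy_step_def by auto
    then obtain u where u: "u \<in> U i" "Ws!i = cl (U i) u" unfolding part_of_iff by auto
    have uV: "u \<in> V" using u U_sub by auto
    have W: "Ws!i \<subseteq> cl V u" using u cl_sub[OF U_sub] by auto
    have "\<forall>x\<in>Ws!i. {v\<in>Ws!i. E x v} = {}"
    proof (intro ballI equalityI subsetI)
      fix x v assume x: "x \<in> Ws!i" and v: "v \<in> {v\<in>Ws!i. E x v}"
      have xc: "x \<in> cl V u" and vc: "v \<in> cl V u" using x v W by auto
      then have "x \<in> V" using cl_V uV by auto
      have "cl V x = cl V u" using cl_same[OF uV xc] .
      then have "v \<in> cl V x" using vc by simp
      then have "\<not> E x v" using cl_V \<open>x \<in> V\<close> by auto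
      then show "v \<in> {}" using v by auto
    qed auto
    then show ?thesis unfolding t_sparse_def
    proof (intro ballI)
      fix x assume h: "\<forall>x\<in>Ws!i. {v\<in>Ws!i. E x v} = {}" and x: "x \<in> Ws!i"
      then have "{v\<in>Ws!i. E x v} = {}" by blast
      then show "card {v\<in>Ws!i. E x v} \<le> t" by (simp only: card.empty le0)
    qed
  next
    case False
    then show ?thesis using gs[OF i] unfolding greedy_step_def by auto
  qed
qed

lemma rc: "i < n \<Longrightarrow> v \<in> Ws!i \<Longrightarrow> run_coloring Ws v = i"
  unfolding run_coloring_def
proof (rule Least_equality)
  assume "i < n" "v \<in> Ws!i"
  then show "i < n \<and> v \<in> Ws!i" by auto
  fix j assume j: "j < n \<and> v \<in> Ws!j"
  show "i \<le> j"
  proof (rule ccontr)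
    assume "\<not> i \<le> j"
    then have "j < i" by simp
    then have "Ws!j \<inter> Ws!i = {}" using W_disj[of j i] \<open>i < n\<close> by blast
    then show False using j \<open>v \<in> Ws!i\<close> by blast
  qed
qed

lemma in_some: "v \<in> V \<Longrightarrow> \<exists>i<n. v \<in> Ws!i"
  using V_UN by auto

lemma rc_range: "run_coloring Ws ` V \<subseteq> {..<n}"
  using in_some rc by fastforce

lemma rc_relaxed: "relaxed_coloring t V E (run_coloring Ws)"
  unfolding relaxed_coloring_def
proof
  fix u assume u: "u \<in> V"
  then obtain i where i: "i < n" "u \<in> Ws!i" using in_some by auto
  have "{v\<in>V. E u v \<and> run_coloring Ws v = run_coloring Ws u} \<subseteq> {v\<in>Ws!i. E u v}"
  proof
    fix v assume v: "v \<in> {v\<in>V. E u v \<and> run_coloring Ws v = run_coloring Ws u}"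
    then obtain j where j: "j < n" "v \<in> Ws!j" using in_some by auto
    have "j = i" using rc[OF j] rc[OF i] v by auto
    then show "v \<in> {v\<in>Ws!i. E u v}" using j v by auto
  qed
  moreover have "finite {v\<in>Ws!i. E u v}" using fin_W[OF i(1)] by simp
  ultimately have "card {v\<in>V. E u v \<and> run_coloring Ws v = run_coloring Ws u} \<le> card {v\<in>Ws!i. E u v}"
    using card_mono by blast
  also have "\<dots> \<le> t" using W_sparse[OF i(1)] i unfolding t_sparse_def by auto
  finally show "card {v\<in>V. E u v \<and> run_coloring Ws v = run_coloring Ws u} \<le> t" .
qed

lemma small_sparse: "S \<subseteq> V \<Longrightarrow> finite S \<Longrightarrow> card S \<le> t + 1 \<Longrightarrow> t_sparse t E S"
  unfolding t_sparse_def
proof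
  fix u assume a: "S \<subseteq> V" "finite S" "card S \<le> t + 1" "u \<in> S"
  have "{v\<in>S. E u v} \<subseteq> S - {u}" using irr a by auto
  then have "card {v\<in>S. E u v} \<le> card (S - {u})" using a by (meson card_mono finite_Diff)
  also have "\<dots> = card S - 1" using a by auto
  finally show "card {v\<in>S. E u v} \<le> t" using a by linarith
qed

lemma sparse_class: "C \<subseteq> V \<Longrightarrow> t_sparse t E C \<Longrightarrow> (\<exists>u\<in>V. C \<subseteq> cl V u) \<or> card C \<le> 2 * t"
proof -
  assume C: "C \<subseteq> V" "t_sparse t E C"
  show ?thesis
  proof (cases "\<exists>a\<in>C. \<exists>b\<in>C. E a b")
    case True
    then obtain a b where ab: "a \<in> C" "b \<in> C" "E a b" by auto
    have "C \<subseteq> {v\<in>C. E a v} \<union> {v\<in>C. E b v}"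
    proof
      fix v assume v: "v \<in> C"
      show "v \<in> {v\<in>C. E a v} \<union> {v\<in>C. E b v}"
      proof (rule ccontr)
        assume "v \<notin> {v\<in>C. E a v} \<union> {v\<in>C. E b v}"
        then have "\<not> E a v" "\<not> E b v" using v by auto
        moreover have "\<not> E v b" using \<open>\<not> E b v\<close> symE C v ab by blast
        ultimately have "\<not> E a b" using transE C v ab by blast
        then show False using ab by auto
      qed
    qed
    moreover have fC: "finite C" using C finV finite_subset by auto
    ultimately have "card C \<le> card ({v\<in>C. E a v} \<union> {v\<in>C. E b v})"
      by (intro card_mono) auto
    also have "\<dots> \<le> card {v\<in>C. E a v} + card {v\<in>C. E b v}" by (rule card_Un_le)
    also have "\<dots> \<le> t + t"
    proof -
      have "card {v\<in>C. E a v} \<le> t" using C(2) ab(1) unfolding t_sparse_def by blast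
      moreover have "card {v\<in>C. E b v} \<le> t" using C(2) ab(2) unfolding t_sparse_def by blast
      ultimately show ?thesis by simp
    qed
    finally show ?thesis by simp
  next
    case False
    show ?thesis
    proof (cases "C = {}")
      case True then show ?thesis by simp
    next
      case False
      then obtain a where a: "a \<in> C" by auto
      have "C \<subseteq> cl V a" using \<open>\<not> (\<exists>a\<in>C. \<exists>b\<in>C. E a b)\<close> a C unfolding cl_def by auto
      then show ?thesis using a C by auto
    qed
  qed
qed


definition w :: "'a \<Rightarrow> real" where
  "w v = real (2 * t) / real (max (2 * t) (card (cl V v)))"

lemma w_le1: "w v \<le> 1" and w_nn: "0 \<le> w v"
proof -
  have "real (2*t) \<le> real (max (2 * t) (card (cl V v)))" by simp
  moreover have "0 < real (2*t)" using t1 by simp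
  ultimately show "w v \<le> 1" "0 \<le> w v" unfolding w_def by (auto simp: divide_le_eq_1)
qed

lemma sum_class: "C \<subseteq> V \<Longrightarrow> t_sparse t E C \<Longrightarrow> sum w C \<le> real (2 * t)"
proof -
  assume C: "C \<subseteq> V" "t_sparse t E C"
  have fC: "finite C" using C finV finite_subset by auto
  from sparse_class[OF C] show ?thesis
  proof
    assume "\<exists>u\<in>V. C \<subseteq> cl V u"
    then obtain u where u: "u \<in> V" "C \<subseteq> cl V u" by auto
    have "\<forall>v\<in>C. w v = w u" using cl_same u unfolding w_def by auto
    then have "sum w C = real (card C) * w u" by simp
    also have "\<dots> = real (2*t) * (real (card C) / real (max (2 * t) (card (cl V u))))"
      unfolding w_def by simp
    also have "\<dots> \<le> real (2*t) * 1"
    proof (rule mult_left_mono)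
      have "card C \<le> card (cl V u)" using u fin_cl card_mono by blast
      then have "real (card C) \<le> real (max (2 * t) (card (cl V u)))" by simp
      moreover have "0 < real (max (2 * t) (card (cl V u)))" using t1 by simp
      ultimately show "real (card C) / real (max (2 * t) (card (cl V u))) \<le> 1"
        by (simp add: divide_le_eq_1)
    qed simp
    finally show ?thesis by simp
  next
    assume "card C \<le> 2 * t"
    have "sum w C \<le> sum (\<lambda>_. 1) C" using w_le1 by (meson sum_mono)
    also have "\<dots> = real (card C)" by simp
    finally show ?thesis using \<open>card C \<le> 2 * t\<close> by simp
  qed
qed

definition type1 :: "nat \<Rightarrow> bool" where
  "type1 i \<longleftrightarrow> (\<exists>Q. part_of (U i) E Q \<and> card Q \<ge> 2 * t)"

lemma inv: "i \<le> n \<Longrightarrow> v \<in> V \<Longrightarrow> 2*t \<le> card (cl V v) \<Longrightarrow> cl V v \<inter> U i = {} \<or> cl V v \<subseteq> U i"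
proof (induction i)
  case 0
  then show ?case using U_0 cl_V by auto
next
  case (Suc i)
  then have i: "i < n" by auto
  have IH: "cl V v \<inter> U i = {} \<or> cl V v \<subseteq> U i" using Suc by auto
  have US: "U (Suc i) = U i - Ws!i" using U_step[OF i] .
  show ?case
  proof (cases "type1 i")
    case True
    then have "part_of (U i) E (Ws!i)" using gs[OF i] unfolding greedy_step_def type1_def by auto
    then obtain u where u: "u \<in> U i" "Ws!i = cl (U i) u" unfolding part_of_iff by auto
    have uV: "u \<in> V" using u U_sub by auto
    have W: "Ws!i = cl V u \<inter> U i" using u cl_sub[OF U_sub] by auto
    show ?thesis
    proof (cases "cl V v = cl V u")
      case True
      then show ?thesis using US W by auto
    next
      case False
      then have "cl V v \<inter> cl V u = {}" using cl_disj uV Suc.prems by auto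
      then have "cl V v \<inter> U (Suc i) = cl V v \<inter> U i" using US W by auto
      then show ?thesis using IH by auto
    qed
  next
    case False
    have "cl V v \<inter> U i = {}"
    proof (rule ccontr)
      assume "cl V v \<inter> U i \<noteq> {}"
      then have sub: "cl V v \<subseteq> U i" using IH by auto
      then have "v \<in> U i" using cl_self Suc.prems by auto
      moreover have "cl (U i) v = cl V v" using sub cl_sub[OF U_sub] by auto
      ultimately have "part_of (U i) E (cl V v)" unfolding part_of_iff by (intro bexI[of _ v]) auto
      then show False using False Suc.prems unfolding type1_def by auto
    qed
    then show ?thesis using US by auto
  qed
qed

lemma t1_full: "i < n \<Longrightarrow> type1 i \<Longrightarrow> \<exists>u\<in>V. Ws!i = cl V u \<and> 2*t \<le> card (cl V u)"
proof -
  assume i: "i < n" and T: "type1 i"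
  then obtain Q where Q: "part_of (U i) E Q" "card Q \<ge> 2 * t" unfolding type1_def by auto
  have g: "part_of (U i) E (Ws!i) \<and> (\<forall>Q. part_of (U i) E Q \<longrightarrow> card Q \<le> card (Ws!i))"
    using gs[OF i] T unfolding greedy_step_def type1_def by auto
  then have cW: "card (Ws!i) \<ge> 2 * t" using Q by fastforce
  obtain u where u: "u \<in> U i" "Ws!i = cl (U i) u" using g unfolding part_of_iff by auto
  have uV: "u \<in> V" using u U_sub by auto
  have W: "Ws!i = cl V u \<inter> U i" using u cl_sub[OF U_sub] by auto
  have "card (Ws!i) \<le> card (cl V u)" using W fin_cl by (simp add: card_mono)
  then have big: "2*t \<le> card (cl V u)" using cW by auto
  have "cl V u \<inter> U i \<noteq> {}" using u cl_self uV by auto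
  moreover have "cl V u \<inter> U i = {} \<or> cl V u \<subseteq> U i" using inv[of i u] i uV big by auto
  ultimately have "cl V u \<subseteq> U i" by blast
  then show ?thesis using W uV big by auto
qed

lemma sum_t1: "i < n \<Longrightarrow> type1 i \<Longrightarrow> sum w (Ws!i) = real (2*t)"
proof -
  assume i: "i < n" and T: "type1 i"
  obtain u where u: "u \<in> V" "Ws!i = cl V u" "2*t \<le> card (cl V u)" using t1_full[OF i T] by auto
  have "\<forall>v\<in>cl V u. w v = w u" using cl_same u unfolding w_def by auto
  then have "sum w (Ws!i) = real (card (cl V u)) * w u" using u by simp
  also have "\<dots> = real (2*t)" unfolding w_def using u t1 by (simp add: max_def)
  finally show ?thesis .
qed

lemma t2_small: "i < n \<Longrightarrow> \<not> type1 i \<Longrightarrow> v \<in> U i \<Longrightarrow> w v = 1"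
proof -
  assume i: "i < n" and T: "\<not> type1 i" and v: "v \<in> U i"
  have vV: "v \<in> V" using v U_sub by auto
  have "part_of (U i) E (cl (U i) v)" unfolding part_of_iff using v by auto
  then have c1: "card (cl (U i) v) < 2*t" using T unfolding type1_def using not_le by blast
  have "card (cl V v) < 2*t"
  proof (rule ccontr)
    assume "\<not> card (cl V v) < 2*t"
    then have big: "2*t \<le> card (cl V v)" by auto
    have "cl V v \<inter> U i \<noteq> {}" using v cl_self vV by auto
    moreover have "cl V v \<inter> U i = {} \<or> cl V v \<subseteq> U i" using inv[of i v] i vV big by auto
    ultimately have "cl V v \<subseteq> U i" by blast
    then have "cl (U i) v = cl V v" using cl_sub[OF U_sub] by auto
    then show False using c1 big by auto
  qed
  then have "max (2 * t) (card (cl V v)) = 2 * t" by simp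
  then show ?thesis unfolding w_def using t1 by simp
qed

lemma sum_t2: "i < n \<Longrightarrow> \<not> type1 i \<Longrightarrow> sum w (Ws!i) = real (card (Ws!i))"
proof -
  assume i: "i < n" and T: "\<not> type1 i"
  have "sum w (Ws!i) = sum (\<lambda>_. 1) (Ws!i)"
    using t2_small[OF i T] W_sub[OF i] by (intro sum.cong) auto
  then show ?thesis by simp
qed

lemma t2_card: "i < n \<Longrightarrow> \<not> type1 i \<Longrightarrow> 1 \<le> card (Ws!i) \<and> (Suc i < n \<longrightarrow> t + 1 \<le> card (Ws!i))"
proof -
  assume i: "i < n" and T: "\<not> type1 i"
  have g: "Ws!i \<subseteq> U i \<and> t_sparse t E (Ws!i) \<and> (\<forall>S. S \<subseteq> U i \<and> t_sparse t E S \<longrightarrow> card S \<le> card (Ws!i))"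
    using gs[OF i] T unfolding greedy_step_def type1_def by auto
  have fU: "finite (U i)" using U_sub finV finite_subset by blast
  obtain x where x: "x \<in> U i" using gs[OF i] by auto
  have "{x} \<subseteq> V" using x U_sub by auto
  then have "t_sparse t E {x}" using small_sparse[of "{x}"] by simp
  moreover have "{x} \<subseteq> U i" using x by simp
  ultimately have "card {x} \<le> card (Ws!i)" using g by blast
  then have one: "1 \<le> card (Ws!i)" by simp
  have "t + 1 \<le> card (Ws!i)" if si: "Suc i < n"
  proof (rule ccontr)
    assume "\<not> t + 1 \<le> card (Ws!i)"
    then have cw: "card (Ws!i) \<le> t" by auto
    show False
    proof (cases "t + 1 \<le> card (U i)")
      case True
      then obtain S where S: "S \<subseteq> U i" "card S = t + 1" using obtain_subset_with_card_n[of "t+1" "U i"] by blast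
      have "finite S" using S fU finite_subset by blast
      moreover have "S \<subseteq> V" using S U_sub by blast
      ultimately have "t_sparse t E S" using small_sparse[of S] S by simp
      then have "card S \<le> card (Ws!i)" using g S by blast
      then show False using S cw by simp
    next
      case False
      then have "t_sparse t E (U i)" using small_sparse[OF U_sub fU] by simp
      then have "card (U i) \<le> card (Ws!i)" using g by blast
      moreover have "card (Ws!i) \<le> card (U i)" using g fU card_mono by blast
      ultimately have "card (Ws!i) = card (U i)" by simp
      then have "Ws!i = U i" using g fU card_subset_eq by blast
      then have "U (Suc i) = {}" using U_step[OF i] by auto
      then show False using gs[OF si] by auto
    qed
  qed
  then show ?thesis using one by auto
qed



lemma chi_ex: "\<exists>f :: 'a \<Rightarrow> nat. f ` V \<subseteq> {..<chi_t t V E} \<and> relaxed_coloring t V E f"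
  unfolding chi_t_def
  by (rule LeastI_ex) (use rc_range rc_relaxed in blast)

lemma chi_le: "chi_t t V E \<le> n"
  unfolding chi_t_def
  by (rule Least_le) (use rc_range rc_relaxed in blast)

lemma sumV_upper: "sum w V \<le> real (2 * t) * real (chi_t t V E)"
proof -
  obtain f :: "'a \<Rightarrow> nat" where f: "f ` V \<subseteq> {..<chi_t t V E}" "relaxed_coloring t V E f"
    using chi_ex by blast
  define C where "C a = {v\<in>V. f v = a}" for a
  have VU: "V = (\<Union>a\<in>{..<chi_t t V E}. C a)" using f(1) unfolding C_def by auto
  have "sum w (\<Union>a\<in>{..<chi_t t V E}. C a) = (\<Sum>a<chi_t t V E. sum w (C a))"
    by (rule sum.UNION_disjoint) (use finV in \<open>auto simp: C_def\<close>)
  then have "sum w V = (\<Sum>a<chi_t t V E. sum w (C a))" by (simp only: VU[symmetric])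
  also have "\<dots> \<le> (\<Sum>a<chi_t t V E. real (2*t))"
  proof (rule sum_mono)
    fix a assume "a \<in> {..<chi_t t V E}"
    have "t_sparse t E (C a)"
      unfolding t_sparse_def
    proof
      fix u assume u: "u \<in> C a"
      have "{v\<in>C a. E u v} = {v\<in>V. E u v \<and> f v = f u}" using u unfolding C_def by auto
      then show "card {v\<in>C a. E u v} \<le> t" using f(2) u unfolding relaxed_coloring_def C_def by auto
    qed
    then show "sum w (C a) \<le> real (2*t)" using sum_class[of "C a"] unfolding C_def by auto
  qed
  also have "\<dots> = real (2 * t) * real (chi_t t V E)" by simp
  finally show ?thesis .
qed

lemma count: "n \<le> 2 * chi_t t V E"
proof -
  define I1 where "I1 = {i\<in>{..<n}. type1 i}"
  define I2 where "I2 = {i\<in>{..<n}. \<not> type1 i}"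
  define S where "S = (\<Sum>i\<in>I2. card (Ws!i))"
  define chi where "chi = chi_t t V E"
  have fI: "finite I1" "finite I2" unfolding I1_def I2_def by auto
  have un: "{..<n} = I1 \<union> I2" "I1 \<inter> I2 = {}" unfolding I1_def I2_def by auto
  have "sum w (\<Union>i\<in>{..<n}. Ws!i) = (\<Sum>i<n. sum w (Ws!i))"
    by (rule sum.UNION_disjoint) (use fin_W W_disj' in auto)
  then have "sum w V = (\<Sum>i<n. sum w (Ws!i))" by (simp only: V_UN[symmetric])
  also have "\<dots> = (\<Sum>i\<in>I1. sum w (Ws!i)) + (\<Sum>i\<in>I2. sum w (Ws!i))"
    using un fI by (simp add: sum.union_disjoint)
  also have "(\<Sum>i\<in>I1. sum w (Ws!i)) = (\<Sum>i\<in>I1. real (2*t))"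
    using sum_t1 unfolding I1_def by (intro sum.cong) auto
  also have "(\<Sum>i\<in>I2. sum w (Ws!i)) = (\<Sum>i\<in>I2. real (card (Ws!i)))"
    using sum_t2 unfolding I2_def by (intro sum.cong) auto
  finally have "sum w V = real (2*t*card I1 + S)" unfolding S_def by simp
  then have "real (2*t*card I1 + S) \<le> real (2*t*chi)" using sumV_upper unfolding chi_def by simp
  then have A: "2*t*card I1 + S \<le> 2*t*chi" by linarith
  have nn: "n = card I1 + card I2" using un fI by (metis card_Un_disjoint card_lessThan)
  show ?thesis
  proof (cases "I2 = {}")
    case True
    have "(2*t) * card I1 \<le> (2*t) * chi" using A by linarith
    then have "card I1 \<le> chi" using mult_le_cancel1[of "2*t" "card I1" chi] t1 by simp
    then show ?thesis using nn True unfolding chi_def by simp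
  next
    case False
    define g where "g i = card (Ws!i) + (if i = n - 1 then t else 0)" for i
    have "(\<Sum>i\<in>I2. t) < (\<Sum>i\<in>I2. g i)"
    proof (rule sum_strict_mono[OF fI(2) False])
      fix i assume "i \<in> I2"
      then have i: "i < n" "\<not> type1 i" unfolding I2_def by auto
      show "t < g i"
      proof (cases "i = n - 1")
        case True then show ?thesis using t2_card[OF i] unfolding g_def by auto
      next
        case False
        then have "Suc i < n" using i by auto
        then show ?thesis using t2_card[OF i] unfolding g_def by auto
      qed
    qed
    also have "(\<Sum>i\<in>I2. g i) = S + (\<Sum>i\<in>I2. (if i = n - 1 then t else 0))"
      unfolding g_def S_def by (simp add: sum.distrib)
    also have "(\<Sum>i\<in>I2. (if i = n - 1 then t else 0)) \<le> (\<Sum>i\<in>{..<n}. (if i = n - 1 then t else 0))"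
      using un fI by (intro sum_mono2) auto
    also have "\<dots> \<le> t" by simp
    finally have B: "t * card I2 < S + t" by (simp add: mult.commute)
    have "t * (2 * card I1 + card I2) < t * (2 * chi + 1)"
      using A B by (simp add: algebra_simps)
    then have "2 * card I1 + card I2 < 2 * chi + 1" by (meson mult_less_cancel1)
    then show ?thesis using nn unfolding chi_def by simp
  qed
qed

end

theorem mainTheorem6:
  fixes t :: nat and V :: "'a set" and E :: "'a \<Rightarrow> 'a \<Rightarrow> bool" and Ws :: "'a set list"
  assumes "t \<ge> 1"
    and "complete_multipartite V E"
    and "greedy_run t V E Ws"
  shows "relaxed_coloring t V E (run_coloring Ws)
         \<and> card (run_coloring Ws ` V) \<le> 2 * chi_t t V E"
proof -
  interpret grun t V E Ws using assms by unfold_locales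
  have "card (run_coloring Ws ` V) \<le> card {..<length Ws}"
    using rc_range by (rule card_mono[rotated]) simp
  then show ?thesis using rc_relaxed count by simp
qed

end
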